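(* Let $(X,d,\mu)$ be a space of homogeneous type, $\mathcal{D}$ a dyadic system, $1<p<\infty$, $w\in A_{p}$ and $\mathcal{S}\subset\mathcal{D}$ an $\eta$-sparse family of cubes, $\eta\in(0,1)$. Then $$\sum_{Q\in\mathcal{S}}w(Q)\leq c\,\frac{1}{\eta^p}[w]_{A_{p}}\,w\Big(\bigcup_{Q\in\mathcal{S}}Q\Big),$$ where $c$ depends only on $X$ and the parameters of $\mathcal{D}$.
   Context: Space of homogeneous type: quasi-metric $d$, doubling Borel measure $\mu$ with $0<\mu(B)<\infty$ for balls. A dyadic system $\mathcal{D}$ with parameters $0<c_0\le C_0$, $\delta\in(0,1)$: generations $\mathcal{D}_k$ partition $X$, are nested, and each $Q^k_j$ satisfies $B(z^k_j,c_0\delta^k)\subset Q^k_j\subset B(z^k_j,C_0\delta^k)$. $\eta$-sparse: there are pairwise disjoint $E_Q\subset Q$ with $\mu(E_Q)\ge\eta\mu(Q)$. $w(E)=\int_Ew\,d\mu$ and $[w]_{A_p}=\sup_B\frac{w(B)}{\mu(B)}\big(\frac{1}{\mu(B)}\int_Bw^{-1/(p-1)}d\mu\big)^{p-1}$, the supremum over balls. *)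

theory Defs
  imports "HOL-Analysis.Analysis"
begin

definition qball :: "('a \<Rightarrow> 'a \<Rightarrow> real) \<Rightarrow> 'a \<Rightarrow> real \<Rightarrow> 'a set" where
  "qball d x r = {y. d x y < r}"

text \<open>Quasi-metric on the whole type (the type is the underlying set X).\<close>
definition quasi_metric :: "('a \<Rightarrow> 'a \<Rightarrow> real) \<Rightarrow> bool" where
  "quasi_metric d \<longleftrightarrow>
     (\<exists>A0 \<ge> 1. \<forall>x y z. d x y \<ge> 0 \<and> (d x y = 0 \<longleftrightarrow> x = y) \<and> d x y = d y x
                        \<and> d x y \<le> A0 * (d x z + d z y))"

definition homogeneous_space :: "'a measure \<Rightarrow> ('a \<Rightarrow> 'a \<Rightarrow> real) \<Rightarrow> bool" where
  "homogeneous_space M d \<longleftrightarrow>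
     quasi_metric d \<and> space M = UNIV \<and>
     (\<forall>x r. r > 0 \<longrightarrow> qball d x r \<in> sets M \<and>
                      0 < emeasure M (qball d x r) \<and> emeasure M (qball d x r) < \<infinity>) \<and>
     (\<exists>C. \<forall>x r. r > 0 \<longrightarrow> emeasure M (qball d x (2 * r)) \<le> ennreal C * emeasure M (qball d x r))"

definition dyadic_system ::
  "'a measure \<Rightarrow> ('a \<Rightarrow> 'a \<Rightarrow> real) \<Rightarrow> real \<Rightarrow> real \<Rightarrow> real \<Rightarrow> (int \<Rightarrow> 'a set set) \<Rightarrow> bool" where
  "dyadic_system M d c0 C0 \<delta> D \<longleftrightarrow>
     0 < c0 \<and> c0 \<le> C0 \<and> 0 < \<delta> \<and> \<delta> < 1 \<and>
     (\<forall>k. \<Union>(D k) = UNIV) \<and>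
     (\<forall>k. \<forall>Q\<in>D k. \<forall>P\<in>D k. Q \<noteq> P \<longrightarrow> Q \<inter> P = {}) \<and>
     (\<forall>k l. k \<le> l \<longrightarrow> (\<forall>Q\<in>D l. \<forall>P\<in>D k. Q \<subseteq> P \<or> Q \<inter> P = {})) \<and>
     (\<forall>k. \<forall>Q\<in>D k. Q \<in> sets M \<and>
          (\<exists>z. qball d z (c0 * \<delta> powr real_of_int k) \<subseteq> Q \<and>
               Q \<subseteq> qball d z (C0 * \<delta> powr real_of_int k)))"

definition dyadic_cubes :: "(int \<Rightarrow> 'a set set) \<Rightarrow> 'a set set" where
  "dyadic_cubes D = (\<Union>k. D k)"

definition sparse :: "'a measure \<Rightarrow> real \<Rightarrow> 'a set set \<Rightarrow> bool" where
  "sparse M \<eta> S \<longleftrightarrow>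
     (\<exists>E. disjoint_family_on E S \<and>
          (\<forall>Q\<in>S. E Q \<subseteq> Q \<and> E Q \<in> sets M \<and> emeasure M (E Q) \<ge> ennreal \<eta> * emeasure M Q))"

definition wmeas :: "'a measure \<Rightarrow> ('a \<Rightarrow> real) \<Rightarrow> 'a set \<Rightarrow> ennreal" where
  "wmeas M w E = (\<integral>\<^sup>+ x\<in>E. ennreal (w x) \<partial>M)"

definition Ap_quantity ::
  "'a measure \<Rightarrow> ('a \<Rightarrow> 'a \<Rightarrow> real) \<Rightarrow> ('a \<Rightarrow> real) \<Rightarrow> real \<Rightarrow> 'a \<Rightarrow> real \<Rightarrow> real" where
  "Ap_quantity M d w p x r =
     (let B = qball d x r; muB = measure M B in
      (enn2real (wmeas M w B) / muB) *
      (enn2real (wmeas M (\<lambda>y. w y powr (-1 / (p - 1))) B) / muB) powr (p - 1))"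

definition in_Ap :: "'a measure \<Rightarrow> ('a \<Rightarrow> 'a \<Rightarrow> real) \<Rightarrow> real \<Rightarrow> ('a \<Rightarrow> real) \<Rightarrow> bool" where
  "in_Ap M d p w \<longleftrightarrow>
     w \<in> borel_measurable M \<and> (AE x in M. w x > 0) \<and> (\<forall>x. w x \<ge> 0) \<and>
     (\<forall>x r. r > 0 \<longrightarrow> wmeas M w (qball d x r) < \<infinity> \<and>
                      wmeas M (\<lambda>y. w y powr (-1 / (p - 1))) (qball d x r) < \<infinity>) \<and>
     bdd_above {Ap_quantity M d w p x r | x r. r > 0}"

definition Ap_const :: "'a measure \<Rightarrow> ('a \<Rightarrow> 'a \<Rightarrow> real) \<Rightarrow> real \<Rightarrow> ('a \<Rightarrow> real) \<Rightarrow> real" where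
  "Ap_const M d p w = Sup {Ap_quantity M d w p x r | x r. r > 0}"

end

theory Submission
  imports Defs
begin

lemma wmeas_pos:
  fixes f :: "'a \<Rightarrow> real"
  assumes fm: "f \<in> borel_measurable M" and fpos: "AE x in M. f x > 0"
    and E: "E \<in> sets M" and Epos: "emeasure M E > 0"
  shows "wmeas M f E > 0"
proof (rule ccontr)
  assume "\<not> wmeas M f E > 0"
  then have "(\<integral>\<^sup>+ x. ennreal (f x) * indicator E x \<partial>M) = 0"
    unfolding wmeas_def by (simp add: not_gr_zero)
  then have "AE x in M. ennreal (f x) * indicator E x = 0"
    using E fm by (subst (asm) nn_integral_0_iff_AE) auto
  then have "AE x in M. x \<notin> E"
    using fpos by eventually_elim (auto simp: indicator_def)
  then have "emeasure M E = 0"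
    using E by (subst (asm) AE_iff_measurable[of E]) (auto dest: sets.sets_into_space)
  then show False using Epos by simp
qed

lemma pointwise_young:
  fixes a A B p :: real
  assumes p: "1 < p" and a: "a > 0" and A: "A > 0" and B: "B > 0"
  shows "1 \<le> A powr (1/p) * B powr ((p-1)/p) *
     ((1/p) * a / A + ((p-1)/p) * (a powr (-1/(p-1))) / B)"
proof -
  define s where "s = a powr (-1/(p-1))"
  have s: "s > 0" using a by (simp add: s_def)
  have Y: "(a/A) powr (1/p) * (s/B) powr ((p-1)/p) \<le> (1/p) * (a/A) + ((p-1)/p) * (s/B)"
    using p a A B s by (intro Youngs_inequality_0) (auto simp: field_simps)
  have "s powr ((p-1)/p) = a powr (-1/p)"
    using p a by (simp add: s_def powr_powr field_simps)
  then have "(a/A) powr (1/p) * (s/B) powr ((p-1)/p)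
      = (a powr (1/p) * a powr (-1/p)) / (A powr (1/p) * B powr ((p-1)/p))"
    using a A B s by (simp add: powr_divide)
  also have "a powr (1/p) * a powr (-1/p) = 1"
    using a by (simp add: powr_add[symmetric])
  finally have "1 / (A powr (1/p) * B powr ((p-1)/p)) \<le> (1/p) * (a/A) + ((p-1)/p) * (s/B)"
    using Y by simp
  moreover have "A powr (1/p) * B powr ((p-1)/p) > 0" using A B by simp
  ultimately show ?thesis
    by (simp add: s_def field_simps)
qed

lemma holder_like:
  fixes w :: "'a \<Rightarrow> real" and p :: real
  assumes p: "1 < p" and wm: "w \<in> borel_measurable M" and wpos: "AE x in M. w x > 0"
    and wnn: "\<forall>x. w x \<ge> 0"
    and E: "E \<in> sets M" and Bl: "Bl \<in> sets M" and EB: "E \<subseteq> Bl"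
    and fin1: "wmeas M w E < \<infinity>"
    and fin2: "wmeas M (\<lambda>y. w y powr (-1/(p-1))) Bl < \<infinity>"
    and Epos: "emeasure M E > 0"
  shows "measure M E powr p \<le> enn2real (wmeas M w E) *
           enn2real (wmeas M (\<lambda>y. w y powr (-1/(p-1))) Bl) powr (p-1)"
proof -
  define \<sigma> where "\<sigma> = (\<lambda>y. w y powr (-1/(p-1)))"
  have \<sigma>m: "\<sigma> \<in> borel_measurable M" unfolding \<sigma>_def using wm by measurable
  have \<sigma>pos: "AE x in M. \<sigma> x > 0" using wpos by eventually_elim (simp add: \<sigma>_def)
  define A where "A = enn2real (wmeas M w E)"
  define Bv where "Bv = enn2real (wmeas M \<sigma> Bl)"
  have WA: "wmeas M w E = ennreal A" using fin1 unfolding A_def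
    by (simp add: ennreal_enn2real_if)
  have WB: "wmeas M \<sigma> Bl = ennreal Bv" using fin2 unfolding Bv_def \<sigma>_def
    by (simp add: ennreal_enn2real_if)
  have "wmeas M w E > 0" using wmeas_pos[OF wm wpos E Epos] .
  then have Apos: "A > 0" using WA by (simp add: ennreal_less_zero_iff)
  have "wmeas M \<sigma> E > 0" using wmeas_pos[OF \<sigma>m \<sigma>pos E Epos] .
  moreover have "wmeas M \<sigma> E \<le> wmeas M \<sigma> Bl"
    unfolding wmeas_def using EB
    by (intro nn_integral_mono) (auto simp: indicator_def)
  ultimately have "0 < ennreal Bv" using WB by (metis order_less_le_trans)
  then have Bpos: "Bv > 0" by simp
  have \<sigma>E: "wmeas M \<sigma> E \<le> ennreal Bv"
    using \<open>wmeas M \<sigma> E \<le> wmeas M \<sigma> Bl\<close> WB by simp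
  define K where "K = A powr (1/p) * Bv powr ((p-1)/p)"
  define k1 where "k1 = K * (1/p) / A"
  define k2 where "k2 = K * ((p-1)/p) / Bv"
  have Kpos: "K > 0" using Apos Bpos by (simp add: K_def)
  have k1: "k1 \<ge> 0" and k2: "k2 \<ge> 0" using Kpos Apos Bpos p by (simp_all add: k1_def k2_def)
  have "emeasure M E = (\<integral>\<^sup>+ x. indicator E x \<partial>M)" using E by simp
  also have "\<dots> \<le> (\<integral>\<^sup>+ x. (ennreal (k1 * w x) + ennreal (k2 * \<sigma> x)) * indicator E x \<partial>M)"
  proof (rule nn_integral_mono_AE)
    show "AE x in M. indicator E x \<le> (ennreal (k1 * w x) + ennreal (k2 * \<sigma> x)) * indicator E x"
      using wpos
    proof eventually_elim
      case (elim x)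
      have "1 \<le> K * ((1/p) * w x / A + ((p-1)/p) * \<sigma> x / Bv)"
        using pointwise_young[OF p elim Apos Bpos] unfolding K_def \<sigma>_def by simp
      also have "\<dots> = k1 * w x + k2 * \<sigma> x" by (simp add: k1_def k2_def field_simps)
      finally have le1: "1 \<le> k1 * w x + k2 * \<sigma> x" .
      have "k1 * w x \<ge> 0" "k2 * \<sigma> x \<ge> 0" using k1 k2 wnn by (auto simp: \<sigma>_def)
      then have "ennreal (k1 * w x) + ennreal (k2 * \<sigma> x) = ennreal (k1 * w x + k2 * \<sigma> x)"
        by (simp add: ennreal_plus)
      then have "ennreal 1 \<le> ennreal (k1 * w x) + ennreal (k2 * \<sigma> x)"
        using le1 by (simp add: ennreal_leI)
      then show ?case by (auto simp: indicator_def)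
    qed
  qed
  also have "\<dots> = (\<integral>\<^sup>+ x. ennreal k1 * (ennreal (w x) * indicator E x) + ennreal k2 * (ennreal (\<sigma> x) * indicator E x) \<partial>M)"
    using k1 k2 wnn
    by (intro nn_integral_cong) (auto simp: ennreal_mult distrib_right mult.assoc \<sigma>_def)
  also have "\<dots> = ennreal k1 * wmeas M w E + ennreal k2 * wmeas M \<sigma> E"
    unfolding wmeas_def using wm \<sigma>m E
    by (subst nn_integral_add) (auto simp: nn_integral_cmult)
  also have "\<dots> \<le> ennreal k1 * ennreal A + ennreal k2 * ennreal Bv"
    using \<sigma>E WA by (intro add_mono mult_left_mono) auto
  also have "\<dots> = ennreal K"
    using k1 k2 Apos Bpos p by (simp add: ennreal_mult[symmetric] ennreal_plus[symmetric] k1_def k2_def field_simps del: ennreal_plus)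
  finally have "emeasure M E \<le> ennreal K" .
  then have mE: "measure M E \<le> K" using Kpos
    by (simp add: measure_def enn2real_leI)
  have "measure M E powr p \<le> K powr p"
    using mE p by (intro powr_mono2) auto
  also have "K powr p = A * Bv powr (p-1)"
    using Apos Bpos p by (simp add: K_def powr_mult powr_powr)
  finally show ?thesis unfolding A_def Bv_def \<sigma>_def .
qed

lemma arith_core:
  fixes WQ WB WE Sg mE mB mQ Ap \<eta> Cd p :: real
  assumes "WQ \<le> WB" "0 \<le> WB" "0 \<le> WE" "0 \<le> Sg"
    and H: "mE powr p \<le> WE * Sg powr (p-1)"
    and A: "WB / mB * (Sg / mB) powr (p-1) \<le> Ap"
    and E: "\<eta> * mQ \<le> mE" and B: "mB \<le> Cd * mQ"
    and "mQ > 0" "mB > 0" "\<eta> > 0" "p > 1" "Cd > 0"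
  shows "WQ \<le> Cd powr p * (1 / \<eta> powr p) * Ap * WE"
proof -
  have A': "WB * Sg powr (p-1) \<le> Ap * mB powr p"
  proof -
    have "WB / mB * (Sg / mB) powr (p-1) = WB * Sg powr (p-1) / mB powr p"
      using assms by (simp add: powr_divide powr_diff field_simps)
    with A have "WB * Sg powr (p-1) / mB powr p \<le> Ap" by simp
    moreover have "mB powr p > 0" using assms by simp
    ultimately show ?thesis by (simp add: pos_divide_le_eq)
  qed
  have Ap0: "0 \<le> Ap"
    using A assms by (smt (verit) divide_nonneg_nonneg mult_nonneg_nonneg powr_ge_zero)
  have "(\<eta> * mQ) powr p \<le> mE powr p"
    using E assms by (intro powr_mono2) auto
  then have "WB * (\<eta> * mQ) powr p \<le> WB * (WE * Sg powr (p-1))"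
    using H assms by (intro mult_left_mono) auto
  also have "\<dots> = WE * (WB * Sg powr (p-1))" by simp
  also have "\<dots> \<le> WE * (Ap * mB powr p)"
    using A' assms by (intro mult_left_mono) auto
  also have "\<dots> \<le> WE * (Ap * (Cd * mQ) powr p)"
    using B assms Ap0 by (intro mult_left_mono powr_mono2) auto
  finally have "WB * \<eta> powr p * mQ powr p \<le> WE * Ap * Cd powr p * mQ powr p"
    using assms by (simp add: powr_mult mult_ac)
  then have "WB * \<eta> powr p \<le> WE * Ap * Cd powr p"
    using assms by (simp add: mult_le_cancel_right)
  then have "WB \<le> Cd powr p * (1 / \<eta> powr p) * Ap * WE"
    using assms by (simp add: field_simps)
  with assms show ?thesis by linarith
qed

lemma doubling_iter:
  assumes "homogeneous_space M d"
  obtains Cd :: real where "Cd \<ge> 1"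
    "\<And>n z r. r > 0 \<Longrightarrow> emeasure M (qball d z (2^n * r)) \<le> ennreal (Cd^n) * emeasure M (qball d z r)"
proof -
  obtain C where C: "\<And>x r. r > 0 \<Longrightarrow> emeasure M (qball d x (2 * r)) \<le> ennreal C * emeasure M (qball d x r)"
    using assms unfolding homogeneous_space_def by blast
  define Cd where "Cd = max C 1"
  have "emeasure M (qball d z (2^n * r)) \<le> ennreal (Cd^n) * emeasure M (qball d z r)" if "r > 0" for n z r
  proof (induction n)
    case 0 then show ?case by simp
  next
    case (Suc n)
    have "emeasure M (qball d z (2^Suc n * r)) = emeasure M (qball d z (2 * (2^n * r)))"
      by (simp add: mult.assoc)
    also have "\<dots> \<le> ennreal C * emeasure M (qball d z (2^n * r))"
      using C that by simp
    also have "\<dots> \<le> ennreal Cd * emeasure M (qball d z (2^n * r))"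
      by (intro mult_right_mono) (auto simp: Cd_def intro!: ennreal_leI)
    also have "\<dots> \<le> ennreal Cd * (ennreal (Cd^n) * emeasure M (qball d z r))"
      using Suc by (intro mult_left_mono) auto
    also have "\<dots> = ennreal (Cd^Suc n) * emeasure M (qball d z r)"
      by (simp add: Cd_def ennreal_mult mult.assoc)
    finally show ?case .
  qed
  moreover have "Cd \<ge> 1" by (simp add: Cd_def)
  ultimately show ?thesis using that by blast
qed

lemma wmeas_density:
  assumes "w \<in> borel_measurable M" "A \<in> sets M"
  shows "wmeas M w A = emeasure (density M (\<lambda>x. ennreal (w x))) A"
  using assms by (simp add: wmeas_def emeasure_density)

theorem lemma2p4:
  fixes M :: "'a measure" and d :: "'a \<Rightarrow> 'a \<Rightarrow> real"
    and D :: "int \<Rightarrow> 'a set set" and c0 C0 \<delta> p :: real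
  assumes "homogeneous_space M d"
    and "dyadic_system M d c0 C0 \<delta> D"
    and "1 < p"
  shows "\<exists>c>0. \<forall>(w :: 'a \<Rightarrow> real) (\<eta> :: real) S.
           in_Ap M d p w \<longrightarrow> 0 < \<eta> \<longrightarrow> \<eta> < 1 \<longrightarrow>
           S \<subseteq> dyadic_cubes D \<longrightarrow> sparse M \<eta> S \<longrightarrow>
           (\<Sum>\<^sub>\<infinity>Q\<in>S. wmeas M w Q)
             \<le> ennreal (c * (1 / \<eta> powr p) * Ap_const M d p w) * wmeas M w (\<Union>S)"
proof -
  note hs = assms(1) and ds = assms(2) and p = assms(3)
  have balls: "\<And>x r. r > 0 \<Longrightarrow> qball d x r \<in> sets M \<and> 0 < emeasure M (qball d x r) \<and> emeasure M (qball d x r) < \<infinity>"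
    using hs unfolding homogeneous_space_def by blast
  obtain Cd :: real where Cd1: "Cd \<ge> 1" and Cd:
    "\<And>n z r. r > 0 \<Longrightarrow> emeasure M (qball d z (2^n * r)) \<le> ennreal (Cd^n) * emeasure M (qball d z r)"
    using doubling_iter[OF hs] by blast
  have c0: "0 < c0" and c0C0: "c0 \<le> C0" and \<delta>: "0 < \<delta>"
    using ds unfolding dyadic_system_def by auto
  obtain m :: nat where m: "C0 / c0 < 2^m" using real_arch_pow[of "2::real"] by auto
  define Cm where "Cm = Cd^m"
  have Cm: "Cm \<ge> 1" using Cd1 by (simp add: Cm_def)
  define c where "c = Cm powr p"
  have cpos: "c > 0" using Cm by (simp add: c_def)
  have cube: "\<exists>z r. r > 0 \<and> Q \<in> sets M \<and> Q \<subseteq> qball d z r \<and>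
      emeasure M (qball d z r) \<le> ennreal Cm * emeasure M Q \<and> 0 < emeasure M Q \<and> emeasure M Q < \<infinity>"
    if Qd: "Q \<in> dyadic_cubes D" for Q
  proof -
    obtain k where k: "Q \<in> D k" using Qd unfolding dyadic_cubes_def by blast
    define s where "s = \<delta> powr real_of_int k"
    have s: "s > 0" using \<delta> by (simp add: s_def)
    obtain z where QM: "Q \<in> sets M" and z1: "qball d z (c0 * s) \<subseteq> Q" and z2: "Q \<subseteq> qball d z (C0 * s)"
    proof -
      have "\<forall>k. \<forall>Q\<in>D k. Q \<in> sets M \<and>
          (\<exists>z. qball d z (c0 * \<delta> powr real_of_int k) \<subseteq> Q \<and>
               Q \<subseteq> qball d z (C0 * \<delta> powr real_of_int k))"
        using ds unfolding dyadic_system_def by (elim conjE) assumption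
      then have "Q \<in> sets M \<and> (\<exists>z. qball d z (c0 * s) \<subseteq> Q \<and> Q \<subseteq> qball d z (C0 * s))"
        using k unfolding s_def by blast
      then show ?thesis using that by blast
    qed
    have r: "C0 * s > 0" using c0 c0C0 s by simp
    have "C0 * s \<le> 2^m * (c0 * s)"
      using m c0 s by (simp add: field_simps)
    then have sub: "qball d z (C0 * s) \<subseteq> qball d z (2^m * (c0 * s))"
      by (auto simp: qball_def)
    have c0s: "c0 * s > 0" using c0 s by simp
    have "emeasure M (qball d z (C0 * s)) \<le> emeasure M (qball d z (2^m * (c0 * s)))"
      using sub balls[of "2^m * (c0 * s)" z] c0s by (intro emeasure_mono) auto
    also have "\<dots> \<le> ennreal Cm * emeasure M (qball d z (c0 * s))"
      using Cd[OF c0s] by (simp add: Cm_def)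
    also have "\<dots> \<le> ennreal Cm * emeasure M Q"
      using z1 QM by (intro mult_left_mono emeasure_mono) auto
    finally have A: "emeasure M (qball d z (C0 * s)) \<le> ennreal Cm * emeasure M Q" .
    have "0 < emeasure M (qball d z (c0 * s))" using balls[OF c0s] by blast
    also have "\<dots> \<le> emeasure M Q" using z1 QM by (intro emeasure_mono) auto
    finally have B: "0 < emeasure M Q" .
    have "emeasure M Q \<le> emeasure M (qball d z (C0 * s))"
      using z2 balls[OF r] by (intro emeasure_mono) auto
    also have "\<dots> < \<infinity>" using balls[OF r] by blast
    finally have C: "emeasure M Q < \<infinity>" .
    show ?thesis using r QM z2 A B C by blast
  qed
  show ?thesis
  proof (intro exI[of _ c] conjI cpos allI impI)
    fix w :: "'a \<Rightarrow> real" and \<eta> :: real and S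
    assume Ap: "in_Ap M d p w" and \<eta>0: "0 < \<eta>" and \<eta>1: "\<eta> < 1"
      and SD: "S \<subseteq> dyadic_cubes D" and sp: "sparse M \<eta> S"
    define \<sigma> where "\<sigma> = (\<lambda>y. w y powr (-1 / (p - 1)))"
    have wm: "w \<in> borel_measurable M" and wpos: "AE x in M. w x > 0" and wnn: "\<forall>x. w x \<ge> 0"
      and wfin: "\<And>x r. r > 0 \<Longrightarrow> wmeas M w (qball d x r) < \<infinity> \<and> wmeas M \<sigma> (qball d x r) < \<infinity>"
      and bdd: "bdd_above {Ap_quantity M d w p x r | x r. r > 0}"
      using Ap unfolding in_Ap_def \<sigma>_def by (elim conjE; blast)+
    obtain E where Edisj: "disjoint_family_on E S" and
      EQ: "\<And>Q. Q \<in> S \<Longrightarrow> E Q \<subseteq> Q \<and> E Q \<in> sets M \<and> emeasure M (E Q) \<ge> ennreal \<eta> * emeasure M Q"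
      using sp unfolding sparse_def by blast
    define K where "K = c * (1 / \<eta> powr p) * Ap_const M d p w"
    have percube: "wmeas M w Q \<le> ennreal K * wmeas M w (E Q)" if QS: "Q \<in> S" for Q
    proof -
      obtain z r where r: "r > 0" and QM: "Q \<in> sets M" and QB: "Q \<subseteq> qball d z r"
        and muB: "emeasure M (qball d z r) \<le> ennreal Cm * emeasure M Q"
        and Qpos: "0 < emeasure M Q" and Qfin: "emeasure M Q < \<infinity>"
        using cube[of Q] QS SD by blast
      define Bl where "Bl = qball d z r"
      have BlM: "Bl \<in> sets M" and Blpos: "0 < emeasure M Bl" and Blfin: "emeasure M Bl < \<infinity>"
        using balls[OF r] unfolding Bl_def by auto
      have EQs: "E Q \<subseteq> Q" and EM: "E Q \<in> sets M" and Emu: "emeasure M (E Q) \<ge> ennreal \<eta> * emeasure M Q"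
        using EQ[OF QS] by auto
      have Epos: "emeasure M (E Q) > 0"
      proof -
        have "ennreal \<eta> > 0" using \<eta>0 by simp
        then have "ennreal \<eta> * emeasure M Q > 0" using Qpos by (simp add: ennreal_zero_less_mult_iff)
        then show ?thesis using Emu by (rule order_less_le_trans)
      qed
      have Efin: "emeasure M (E Q) < \<infinity>"
        using emeasure_mono[OF EQs QM] Qfin by simp
      have WBfin: "wmeas M w Bl < \<infinity>" and SBfin: "wmeas M \<sigma> Bl < \<infinity>"
        using wfin[OF r] unfolding Bl_def by auto
      have wmono: "wmeas M f A \<le> wmeas M f A'" if "A \<subseteq> A'" for f A A'
        unfolding wmeas_def using that by (intro nn_integral_mono) (auto simp: indicator_def)
      have QBl: "Q \<subseteq> Bl" using QB by (simp add: Bl_def)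
      have WQfin: "wmeas M w Q < \<infinity>" using wmono[OF QBl, of w] WBfin by simp
      have WEfin: "wmeas M w (E Q) < \<infinity>" using wmono[OF EQs, of w] WQfin by simp
      have H: "measure M (E Q) powr p \<le> enn2real (wmeas M w (E Q)) * enn2real (wmeas M \<sigma> Bl) powr (p-1)"
        using holder_like[OF p wm wpos wnn EM BlM _ WEfin _ Epos] EQs QBl SBfin
        unfolding \<sigma>_def by auto
      have Aq: "Ap_quantity M d w p z r \<le> Ap_const M d p w"
        unfolding Ap_const_def using r by (intro cSup_upper bdd) auto
      have A: "enn2real (wmeas M w Bl) / measure M Bl * (enn2real (wmeas M \<sigma> Bl) / measure M Bl) powr (p-1) \<le> Ap_const M d p w"
        using Aq unfolding Ap_quantity_def Let_def Bl_def \<sigma>_def by simp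
      have WQB: "enn2real (wmeas M w Q) \<le> enn2real (wmeas M w Bl)"
        using wmono[OF QBl, of w] WBfin by (intro enn2real_mono) auto
      have mE: "\<eta> * measure M Q \<le> measure M (E Q)"
      proof -
        have "enn2real (ennreal \<eta> * emeasure M Q) \<le> enn2real (emeasure M (E Q))"
          using Emu Efin by (intro enn2real_mono) auto
        then show ?thesis using \<eta>0 by (simp add: measure_def enn2real_mult)
      qed
      have mB: "measure M Bl \<le> Cm * measure M Q"
      proof -
        have "enn2real (emeasure M Bl) \<le> enn2real (ennreal Cm * emeasure M Q)"
          using muB Qfin Cm unfolding Bl_def by (intro enn2real_mono) (auto simp: ennreal_mult_less_top)
        then show ?thesis using Cm by (simp add: measure_def enn2real_mult)
      qed
      have mQ: "measure M Q > 0" using Qpos Qfin by (simp add: measure_def enn2real_positive_iff)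
      have mBp: "measure M Bl > 0" using Blpos Blfin by (simp add: measure_def enn2real_positive_iff)
      have core: "enn2real (wmeas M w Q) \<le> Cm powr p * (1 / \<eta> powr p) * Ap_const M d p w * enn2real (wmeas M w (E Q))"
        by (rule arith_core[OF WQB enn2real_nonneg enn2real_nonneg enn2real_nonneg H A mE mB mQ mBp \<eta>0 p]) (use Cm in linarith)
      have Ap0: "0 \<le> Ap_const M d p w"
      proof -
        have "0 \<le> enn2real (wmeas M w Bl) / measure M Bl * (enn2real (wmeas M \<sigma> Bl) / measure M Bl) powr (p-1)"
          by (intro mult_nonneg_nonneg divide_nonneg_nonneg) auto
        then show ?thesis using A by linarith
      qed
      have K0: "K \<ge> 0" using Ap0 cpos by (simp add: K_def)
      have "wmeas M w Q = ennreal (enn2real (wmeas M w Q))" using WQfin by simp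
      also have "\<dots> \<le> ennreal (K * enn2real (wmeas M w (E Q)))"
        using core unfolding K_def c_def by (intro ennreal_leI)
      also have "\<dots> = ennreal K * wmeas M w (E Q)"
        using K0 WEfin by (simp add: ennreal_mult)
      finally show ?thesis .
    qed
    show "(\<Sum>\<^sub>\<infinity>Q\<in>S. wmeas M w Q) \<le> ennreal (c * (1 / \<eta> powr p) * Ap_const M d p w) * wmeas M w (\<Union>S)"
    proof (rule infsum_le_finite_sums)
      show "(\<lambda>Q. wmeas M w Q) summable_on S" by (rule nonneg_summable_on_complete) simp
    next
      fix F assume F: "finite F" "F \<subseteq> S"
      have EF: "E ` F \<subseteq> sets (density M (\<lambda>x. ennreal (w x)))" using EQ F by auto
      have "(\<Sum>Q\<in>F. wmeas M w Q) \<le> (\<Sum>Q\<in>F. ennreal K * wmeas M w (E Q))"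
        using percube F by (intro sum_mono) auto
      also have "\<dots> = ennreal K * (\<Sum>Q\<in>F. emeasure (density M (\<lambda>x. ennreal (w x))) (E Q))"
        using EQ F wm by (simp add: sum_distrib_left wmeas_density subset_iff)
      also have "(\<Sum>Q\<in>F. emeasure (density M (\<lambda>x. ennreal (w x))) (E Q))
          = emeasure (density M (\<lambda>x. ennreal (w x))) (\<Union>Q\<in>F. E Q)"
        using EF F Edisj by (intro sum_emeasure) (auto intro: disjoint_family_on_mono)
      also have "\<dots> = wmeas M w (\<Union>Q\<in>F. E Q)"
        using EQ F wm by (subst wmeas_density) auto
      also have "wmeas M w (\<Union>Q\<in>F. E Q) \<le> wmeas M w (\<Union>S)"
        unfolding wmeas_def using EQ F
        by (intro nn_integral_mono) (auto simp: indicator_def)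
      finally show "(\<Sum>Q\<in>F. wmeas M w Q) \<le> ennreal (c * (1 / \<eta> powr p) * Ap_const M d p w) * wmeas M w (\<Union>S)"
        by (simp add: K_def mult_left_mono)
    qed
  qed
qed

end
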